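(* Let $n\ge3$, $\beta>0$, $\gamma\in(1,2]$ with $\beta\gamma<n$, $p,q>0$, $\sigma_1,\sigma_2\in(-\beta\gamma,\infty)$, and suppose $$pq>(\gamma-1)^2\quad\text{and}\quad \max\{q_0,p_0\}<\frac{n-\beta\gamma}{\gamma-1}.$$ Then there exist double bounded functions $c_1,c_2$ such that the system $u(x)=c_1(x)W_{\beta,\gamma}(|y|^{\sigma_1}v^q)(x)$, $v(x)=c_2(x)W_{\beta,\gamma}(|y|^{\sigma_2}u^p)(x)$ ($x\in\mathbb{R}^n$) admits a positive solution.
   Context: For $f\ge 0$, $f\in L^1_{loc}(\mathbb{R}^n)$, the Wolff potential is $W_{\beta,\gamma}(f)(x)=\int_0^\infty\Big(\frac{\int_{B_t(x)}f(y)\,dy}{t^{n-\beta\gamma}}\Big)^{\frac{1}{\gamma-1}}\frac{dt}{t}$, where $B_t(x)$ is the open ball of radius $t$ centered at $x$. A function $c:\mathbb{R}^n\to\mathbb{R}$ is double bounded if there is $C>0$ with $1/C\le c(x)\le C$ for all $x$. A solution of the system is a pair of nonnegative functions $u,v\in L^1_{loc}(\mathbb{R}^n)$ satisfying both equations for a.e. $x$; it is positive if $u,v>0$. For $pq>(\gamma-1)^2$, $q_0=\frac{\beta\gamma(\gamma-1+q)+(\gamma-1)\sigma_1+\sigma_2 q}{pq-(\gamma-1)^2}$, $p_0=\frac{\beta\gamma(\gamma-1+p)+(\gamma-1)\sigma_2+\sigma_1 p}{pq-(\gamma-1)^2}$. *)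

theory Defs
  imports "HOL-Analysis.Analysis"
begin

definition ball_mass :: "(real^'n \<Rightarrow> real) \<Rightarrow> real^'n \<Rightarrow> real \<Rightarrow> ennreal" where
  "ball_mass f x t = (\<integral>\<^sup>+ y. ennreal (f y) * indicator (ball x t) y \<partial>lebesgue)"

definition wolff :: "real \<Rightarrow> real \<Rightarrow> (real^'n \<Rightarrow> real) \<Rightarrow> real^'n \<Rightarrow> ennreal" where
  "wolff \<beta> \<gamma> f x =
     (\<integral>\<^sup>+ t. (if ball_mass f x t = \<infinity> then \<infinity>
               else ennreal (((enn2real (ball_mass f x t) / t powr (real CARD('n) - \<beta> * \<gamma>))
                              powr (1 / (\<gamma> - 1))) / t))
            * indicator {0<..} t \<partial>lborel)"

definition L1_loc :: "(real^'n \<Rightarrow> real) \<Rightarrow> bool" where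
  "L1_loc f \<longleftrightarrow> f \<in> borel_measurable lebesgue \<and>
     (\<forall>K. compact K \<longrightarrow> set_integrable lebesgue K f)"

definition double_bounded :: "(real^'n \<Rightarrow> real) \<Rightarrow> bool" where
  "double_bounded c \<longleftrightarrow> (\<exists>C>0. \<forall>x. 1 / C \<le> c x \<and> c x \<le> C)"

definition positive_solution ::
  "real \<Rightarrow> real \<Rightarrow> real \<Rightarrow> real \<Rightarrow> real \<Rightarrow> real \<Rightarrow>
   (real^'n \<Rightarrow> real) \<Rightarrow> (real^'n \<Rightarrow> real) \<Rightarrow> (real^'n \<Rightarrow> real) \<Rightarrow> (real^'n \<Rightarrow> real) \<Rightarrow> bool" where
  "positive_solution \<beta> \<gamma> p q \<sigma>1 \<sigma>2 c1 c2 u v \<longleftrightarrow>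
     L1_loc u \<and> L1_loc v \<and> (\<forall>x. u x > 0) \<and> (\<forall>x. v x > 0) \<and>
     (AE x in lebesgue. ennreal (u x) = ennreal (c1 x) * wolff \<beta> \<gamma> (\<lambda>y. norm y powr \<sigma>1 * v y powr q) x) \<and>
     (AE x in lebesgue. ennreal (v x) = ennreal (c2 x) * wolff \<beta> \<gamma> (\<lambda>y. norm y powr \<sigma>2 * u y powr p) x)"

definition q0 :: "real \<Rightarrow> real \<Rightarrow> real \<Rightarrow> real \<Rightarrow> real \<Rightarrow> real \<Rightarrow> real" where
  "q0 \<beta> \<gamma> p q \<sigma>1 \<sigma>2 =
     (\<beta> * \<gamma> * (\<gamma> - 1 + q) + (\<gamma> - 1) * \<sigma>1 + \<sigma>2 * q) / (p * q - (\<gamma> - 1)^2)"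

definition p0 :: "real \<Rightarrow> real \<Rightarrow> real \<Rightarrow> real \<Rightarrow> real \<Rightarrow> real \<Rightarrow> real" where
  "p0 \<beta> \<gamma> p q \<sigma>1 \<sigma>2 =
     (\<beta> * \<gamma> * (\<gamma> - 1 + p) + (\<gamma> - 1) * \<sigma>2 + \<sigma>1 * p) / (p * q - (\<gamma> - 1)^2)"

end

theory Submission
  imports Defs
begin


definition wint :: "real \<Rightarrow> real \<Rightarrow> (real^'n \<Rightarrow> real) \<Rightarrow> real^'n \<Rightarrow> real \<Rightarrow> ennreal" where
  "wint \<beta> \<gamma> f x t = (if ball_mass f x t = \<infinity> then \<infinity>
               else ennreal (((enn2real (ball_mass f x t) / t powr (real CARD('n) - \<beta> * \<gamma>))
                              powr (1 / (\<gamma> - 1))) / t))"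

lemma wolff_wint: "wolff \<beta> \<gamma> f x = (\<integral>\<^sup>+ t. wint \<beta> \<gamma> f x t * indicator {0<..} t \<partial>lborel)"
  by (simp add: wolff_def wint_def)

lemma wint_upper:
  fixes f :: "real^'n \<Rightarrow> real"
  assumes "t > 0" "B \<ge> 0" "ball_mass f x t \<le> ennreal B" "\<gamma> > 1"
  shows "wint \<beta> \<gamma> f x t \<le> ennreal ((B / t powr (real CARD('n) - \<beta> * \<gamma>)) powr (1 / (\<gamma> - 1)) / t)"
proof -
  have fin: "ball_mass f x t \<noteq> \<infinity>" using assms(3) by (metis ennreal_neq_top infinity_ennreal_def top.extremum_uniqueI)
  have le: "enn2real (ball_mass f x t) \<le> B" using assms by (intro enn2real_leI) auto
  have "(enn2real (ball_mass f x t) / t powr (real CARD('n) - \<beta> * \<gamma>)) powr (1 / (\<gamma> - 1))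
        \<le> (B / t powr (real CARD('n) - \<beta> * \<gamma>)) powr (1 / (\<gamma> - 1))"
    using assms le by (intro powr_mono2 divide_right_mono) auto
  then show ?thesis using fin assms unfolding wint_def
    by (auto intro!: ennreal_leI divide_right_mono)
qed

lemma wint_lower:
  fixes f :: "real^'n \<Rightarrow> real"
  assumes "t > 0" "B \<ge> 0" "ennreal B \<le> ball_mass f x t" "\<gamma> > 1"
  shows "ennreal ((B / t powr (real CARD('n) - \<beta> * \<gamma>)) powr (1 / (\<gamma> - 1)) / t) \<le> wint \<beta> \<gamma> f x t"
proof (cases "ball_mass f x t = \<infinity>")
  case True then show ?thesis by (simp add: wint_def)
next
  case False
  have le: "B \<le> enn2real (ball_mass f x t)" using assms False
    by (metis enn2real_ennreal enn2real_mono infinity_ennreal_def top.not_eq_extremum)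
  have "(B / t powr (real CARD('n) - \<beta> * \<gamma>)) powr (1 / (\<gamma> - 1))
        \<le> (enn2real (ball_mass f x t) / t powr (real CARD('n) - \<beta> * \<gamma>)) powr (1 / (\<gamma> - 1))"
    using assms le by (intro powr_mono2 divide_right_mono) auto
  then show ?thesis using False assms unfolding wint_def
    by (auto intro!: ennreal_leI divide_right_mono)
qed

lemma powr_alg:
  fixes K t :: real
  assumes "K \<ge> 0" "t > 0"
  shows "(K * t powr c / t powr e) powr a / t = K powr a * t powr ((c - e) * a - 1)"
proof -
  have "K * t powr c / t powr e = K * t powr (c - e)" by (simp add: powr_diff)
  then have "(K * t powr c / t powr e) powr a = K powr a * t powr ((c-e)*a)"
    using assms by (simp add: powr_mult powr_powr)
  then show ?thesis using assms by (simp add: powr_diff)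
qed

lemma int_pow0:
  assumes "b > 0" "R \<ge> 0"
  shows "(\<integral>\<^sup>+ t. ennreal (t powr (b - 1)) * indicator {0..R} t \<partial>lborel) = ennreal (R powr b / b)"
proof -
  have "((\<lambda>t. t powr (b - 1)) has_integral (R powr (b-1+1) / (b-1+1))) {0..R}"
    by (rule has_integral_powr_from_0) (use assms in auto)
  from nn_integral_has_integral_lebesgue'[OF _ this] show ?thesis by simp
qed

lemma int_powinf:
  assumes "b > 0" "R > 0"
  shows "(\<integral>\<^sup>+ t. ennreal (t powr (- b - 1)) * indicator {R..} t \<partial>lborel) = ennreal (R powr (-b) / b)"
proof -
  have "((\<lambda>t. t powr (-b - 1)) has_integral (-(R powr (-b-1+1)) / (-b-1+1))) {R..}"
    by (rule has_integral_powr_to_inf) (use assms in auto)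
  from nn_integral_has_integral_lebesgue'[OF _ this] show ?thesis by simp
qed


lemma wolff_upper_gen:
  fixes f :: "real^'n \<Rightarrow> real" and \<beta> \<gamma> :: real
  defines "e \<equiv> real CARD('n) - \<beta> * \<gamma>"
  assumes g: "\<gamma> > 1" and R: "R > 0" and K: "K1 \<ge> 0" "K2 \<ge> 0"
    and b1: "b1 = (c1 - e) * (1/(\<gamma>-1))" "b1 > 0"
    and b2: "b2 = (e - c2) * (1/(\<gamma>-1))" "b2 > 0"
    and M1: "\<And>t. 0 < t \<Longrightarrow> t \<le> R \<Longrightarrow> ball_mass f x t \<le> ennreal (K1 * t powr c1)"
    and M2: "\<And>t. R \<le> t \<Longrightarrow> ball_mass f x t \<le> ennreal (K2 * t powr c2)"
  shows "wolff \<beta> \<gamma> f x \<le> ennreal (K1 powr (1/(\<gamma>-1)) * R powr b1 / b1 + K2 powr (1/(\<gamma>-1)) * R powr (-b2) / b2)"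
proof -
  let ?a = "1/(\<gamma>-1)"
  have pt: "wint \<beta> \<gamma> f x t * indicator {0<..} t \<le>
      ennreal (K1 powr ?a * t powr (b1 - 1)) * indicator {0..R} t +
      ennreal (K2 powr ?a * t powr (-b2 - 1)) * indicator {R..} t" for t
  proof (cases "t > 0")
    case False then show ?thesis by simp
  next
    case True
    show ?thesis
    proof (cases "t \<le> R")
      case True
      have "wint \<beta> \<gamma> f x t \<le> ennreal ((K1 * t powr c1 / t powr e) powr ?a / t)"
        unfolding e_def using \<open>t > 0\<close> K g M1[OF \<open>t>0\<close> True] by (intro wint_upper) auto
      also have "\<dots> = ennreal (K1 powr ?a * t powr (b1 - 1))"
        using powr_alg[OF K(1) \<open>t>0\<close>] b1 by simp
      finally show ?thesis using True \<open>t>0\<close>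
        by (simp add: indicator_def add_increasing2)
    next
      case False
      have ex: "(c2 - e) * ?a - 1 = -b2 - 1" unfolding b2(1) by (simp add: diff_divide_distrib)
      have "wint \<beta> \<gamma> f x t \<le> ennreal ((K2 * t powr c2 / t powr e) powr ?a / t)"
        unfolding e_def using \<open>t > 0\<close> K g M2 False by (intro wint_upper) auto
      also have "ennreal ((K2 * t powr c2 / t powr e) powr ?a / t) = ennreal (K2 powr ?a * t powr (-b2 - 1))"
        using powr_alg[OF K(2) \<open>t>0\<close>, of c2 e ?a] unfolding ex by simp
      finally show ?thesis using False \<open>t>0\<close>
        by (simp add: indicator_def)
    qed
  qed
  have "wolff \<beta> \<gamma> f x \<le> (\<integral>\<^sup>+ t. ennreal (K1 powr ?a * t powr (b1 - 1)) * indicator {0..R} t +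
      ennreal (K2 powr ?a * t powr (-b2 - 1)) * indicator {R..} t \<partial>lborel)"
    unfolding wolff_wint by (intro nn_integral_mono pt)
  also have "\<dots> = (\<integral>\<^sup>+ t. ennreal (K1 powr ?a * t powr (b1 - 1)) * indicator {0..R} t \<partial>lborel) +
      (\<integral>\<^sup>+ t. ennreal (K2 powr ?a * t powr (-b2 - 1)) * indicator {R..} t \<partial>lborel)"
    by (intro nn_integral_add) auto
  also have "(\<integral>\<^sup>+ t. ennreal (K1 powr ?a * t powr (b1 - 1)) * indicator {0..R} t \<partial>lborel)
     = ennreal (K1 powr ?a) * (\<integral>\<^sup>+ t. ennreal (t powr (b1 - 1)) * indicator {0..R} t \<partial>lborel)"
    by (subst nn_integral_cmult[symmetric]) (auto simp: ennreal_mult mult.assoc)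
  also have "\<dots> = ennreal (K1 powr ?a * (R powr b1 / b1))"
    using int_pow0[of b1 R] b1(2) R by (simp add: ennreal_mult[symmetric] del: ennreal_mult)
  also have "(\<integral>\<^sup>+ t. ennreal (K2 powr ?a * t powr (-b2 - 1)) * indicator {R..} t \<partial>lborel)
     = ennreal (K2 powr ?a) * (\<integral>\<^sup>+ t. ennreal (t powr (-b2 - 1)) * indicator {R..} t \<partial>lborel)"
    by (subst nn_integral_cmult[symmetric]) (auto simp: ennreal_mult mult.assoc)
  also have "\<dots> = ennreal (K2 powr ?a * (R powr (-b2) / b2))"
    using int_powinf[of b2 R] b2(2) R by (simp add: ennreal_mult[symmetric] del: ennreal_mult)
  finally show ?thesis using b1(2) b2(2) R by (simp add: ennreal_plus[symmetric] del: ennreal_plus)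
qed



lemma emeasure_lebesgue_ball_eq:
  "r \<ge> 0 \<Longrightarrow> emeasure lebesgue (ball (c::real^'n) r) = ennreal (unit_ball_vol (CARD('n)) * r ^ CARD('n))"
proof -
  assume r: "r \<ge> 0"
  have "emeasure lebesgue (ball c r) = emeasure lborel (ball c r)"
    by (simp add: emeasure_completion)
  also have "\<dots> = ennreal (unit_ball_vol (DIM(real^'n)) * r ^ DIM(real^'n))"
    using emeasure_ball[OF r] .
  finally show ?thesis by simp
qed

lemma ennreal_le_suminf: "f k \<le> (\<Sum>i. f i :: ennreal)"
  using sum_le_suminf[OF summableI, of "{k}" f] by simp

lemma two_powr_nat: "(2::real) powr (x * real k) = (2 powr x) ^ k"
  by (simp add: powr_powr[symmetric] powr_realpow)

lemma dyadic_exp: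
  assumes "r > 0" "s > 0"
  shows "(r * 2 powr (- real (Suc k))) powr (-s) * (V * (r * 2 powr (- real k)) ^ n)
     = V * 2 powr s * r powr (real n - s) * (2 powr (s - real n)) ^ k"
proof -
  have a1: "(r * 2 powr (- real (Suc k))) powr (-s) = r powr (-s) * 2 powr (s * real (Suc k))"
    using assms by (simp add: powr_mult powr_powr algebra_simps)
  have a2: "(2::real) powr (s * real (Suc k)) = 2 powr s * (2 powr s) ^ k"
    by (simp add: two_powr_nat[symmetric] powr_add[symmetric] algebra_simps)
  have b1: "(r * 2 powr (- real k)) ^ n = r ^ n * (2 powr (- real k)) ^ n"
    by (simp add: power_mult_distrib)
  have b2: "((2::real) powr (- real k)) ^ n = (2 powr (- real n)) ^ k"
    by (simp add: two_powr_nat[symmetric] powr_realpow[symmetric] powr_powr mult.commute)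
  have b3: "r ^ n = r powr real n" using assms by (simp add: powr_realpow)
  have c: "(2 powr s) ^ k * (2 powr - real n) ^ k = ((2::real) powr (s - real n)) ^ k"
    by (simp add: power_mult_distrib[symmetric] powr_add[symmetric])
  have d: "r powr (-s) * r powr (real n) = r powr (real n - s)"
    by (simp add: powr_add[symmetric])
  show ?thesis unfolding a1 a2 b1 b2 b3 c[symmetric] d[symmetric]
    by (simp only: mult_ac)
qed

lemma dyadic_point:
  fixes y :: "real^'n"
  assumes "r > 0" "s > 0"
  shows "ennreal (norm y powr (-s)) * indicator (ball 0 r) y \<le>
     (\<Sum>k. ennreal ((r * 2 powr (- real (Suc k))) powr (-s)) * indicator (ball 0 (r * 2 powr (- real k))) y)"
proof (cases "y \<in> ball 0 r \<and> y \<noteq> 0")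
  case False then show ?thesis by auto
next
  case True
  let ?P = "\<lambda>j::nat. r * 2 powr (- real j) \<le> norm y"
  have ny: "norm y > 0" "norm y < r" using True by auto
  obtain j where j: "(1/2::real) ^ j < norm y / r" using real_arch_pow_inv[of "norm y / r" "1/2"] ny assms by auto
  have pow: "2 powr (- real i) = (1/2::real) ^ i" for i
    by (simp add: powr_minus powr_realpow power_one_over inverse_eq_divide)
  have "?P j" using j assms by (simp add: pow field_simps)
  moreover have "\<not> ?P 0" using ny by simp
  ultimately obtain k where k: "\<not> ?P k" "?P (Suc k)"
    using ex_least_nat_less[of ?P j] by auto
  have "norm y powr (-s) \<le> (r * 2 powr (- real (Suc k))) powr (-s)"
    using k assms by (intro powr_mono2') auto
  then have "ennreal (norm y powr (-s)) * indicator (ball 0 r) y \<le>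
      ennreal ((r * 2 powr (- real (Suc k))) powr (-s)) * indicator (ball 0 (r * 2 powr (- real k))) y"
    using k True by (auto simp: indicator_def)
  also have "\<dots> \<le> (\<Sum>k. ennreal ((r * 2 powr (- real (Suc k))) powr (-s)) * indicator (ball 0 (r * 2 powr (- real k))) y)"
    by (rule ennreal_le_suminf)
  finally show ?thesis .
qed

definition Dc :: "real \<Rightarrow> real \<Rightarrow> real" where
  "Dc N s = unit_ball_vol N * 2 powr s / (1 - 2 powr (s - N))"

lemma ball0_powr:
  assumes "r > 0" "s > 0" "s < real CARD('n)"
  shows "(\<integral>\<^sup>+ y. ennreal (norm (y::real^'n) powr (-s)) * indicator (ball 0 r) y \<partial>lebesgue)
     \<le> ennreal (Dc (CARD('n)) s * r powr (real CARD('n) - s))"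
proof -
  let ?n = "CARD('n)"
  let ?V = "unit_ball_vol (real ?n)"
  let ?q = "2 powr (s - real ?n) :: real"
  let ?a = "\<lambda>k. (r * 2 powr (- real (Suc k))) powr (-s)"
  let ?b = "\<lambda>k. r * 2 powr (- real k)"
  have "(\<integral>\<^sup>+ y. ennreal (norm (y::real^'n) powr (-s)) * indicator (ball 0 r) y \<partial>lebesgue)
     \<le> (\<integral>\<^sup>+ y. (\<Sum>k. ennreal (?a k) * indicator (ball 0 (?b k)) (y::real^'n)) \<partial>lebesgue)"
    by (rule nn_integral_mono) (rule dyadic_point[OF assms(1,2)])
  also have "\<dots> = (\<Sum>k. \<integral>\<^sup>+ y. ennreal (?a k) * indicator (ball 0 (?b k)) (y::real^'n) \<partial>lebesgue)"
    by (rule nn_integral_suminf) (intro borel_measurable_times_ennreal borel_measurable_indicator fmeasurableD[OF lmeasurable_ball] borel_measurable_const)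
  also have "\<dots> = (\<Sum>k. ennreal (?V * 2 powr s * r powr (real ?n - s) * ?q ^ k))"
  proof (intro suminf_cong)
    fix k
    have "(\<integral>\<^sup>+ y. ennreal (?a k) * indicator (ball 0 (?b k)) (y::real^'n) \<partial>lebesgue)
        = ennreal (?a k) * emeasure lebesgue (ball (0::real^'n) (?b k))"
      by (rule nn_integral_cmult_indicator) (rule fmeasurableD[OF lmeasurable_ball])
    also have "emeasure lebesgue (ball (0::real^'n) (?b k)) = ennreal (?V * (?b k)^?n)"
      by (rule emeasure_lebesgue_ball_eq) (use assms in simp)
    also have "ennreal (?a k) * ennreal (?V * (?b k)^?n) = ennreal (?a k * (?V * (?b k) ^ ?n))"
      by (rule ennreal_mult[symmetric]) (use assms in auto)
    also have "?a k * (?V * (?b k) ^ ?n) = ?V * 2 powr s * r powr (real ?n - s) * ?q ^ k"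
      by (rule dyadic_exp[OF assms(1,2)])
    finally show "(\<integral>\<^sup>+ y. ennreal (?a k) * indicator (ball 0 (?b k)) (y::real^'n) \<partial>lebesgue) = \<dots>" .
  qed
  also have "\<dots> = ennreal (?V * 2 powr s * r powr (real ?n - s) * (1 / (1 - ?q)))"
  proof (rule suminf_ennreal_eq)
    show "0 \<le> ?V * 2 powr s * r powr (real ?n - s) * ?q ^ k" for k by simp
    have "?q < 1" using powr_less_mono[of "s - real ?n" 0 2] assms by simp
    then have "(\<lambda>k. ?q ^ k) sums (1 / (1 - ?q))" using geometric_sums[of ?q] by simp
    then show "(\<lambda>k. ?V * 2 powr s * r powr (real ?n - s) * ?q ^ k) sums (?V * 2 powr s * r powr (real ?n - s) * (1 / (1 - ?q)))"
      by (rule sums_mult)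
  qed
  also have "\<dots> = ennreal (Dc (CARD('n)) s * r powr (real CARD('n) - s))"
    by (simp add: Dc_def)
  finally show ?thesis .
qed

lemma Dc_nonneg: "s < N \<Longrightarrow> N \<ge> 0 \<Longrightarrow> Dc N s \<ge> 0"
  unfolding Dc_def using powr_less_mono[of "s - N" 0 2] by (intro divide_nonneg_pos mult_nonneg_nonneg) auto



definition gf :: "real \<Rightarrow> real \<Rightarrow> real^'n \<Rightarrow> real" where
  "gf \<sigma> k y = norm y powr \<sigma> * (1 + norm y) powr (-k)"

lemma gf_nonneg: "gf \<sigma> k y \<ge> 0" by (simp add: gf_def)

lemma gf_le_m: assumes "k \<ge> 0" shows "gf \<sigma> k y \<le> norm y powr (\<sigma> - k)"
proof (cases "y = 0")
  case True then show ?thesis by (simp add: gf_def)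
next
  case False
  have "(1 + norm y) powr (-k) \<le> norm y powr (-k)"
    using False assms by (intro powr_mono2') auto
  then have "gf \<sigma> k y \<le> norm y powr \<sigma> * norm y powr (-k)"
    unfolding gf_def by (intro mult_left_mono) auto
  also have "\<dots> = norm y powr (\<sigma> - k)" by (simp add: powr_add[symmetric])
  finally show ?thesis .
qed

lemma gf_le_s: assumes "k \<ge> 0" shows "gf \<sigma> k y \<le> norm y powr \<sigma>"
proof -
  have "(1 + norm y) powr (-k) \<le> 1 powr (-k)"
    using assms by (intro powr_mono2') auto
  then show ?thesis unfolding gf_def by (intro mult_left_le) auto
qed

lemma gf_ge: assumes "k \<ge> 0" "norm y \<ge> 1/2"
  shows "3 powr (-k) * norm y powr (\<sigma> - k) \<le> gf \<sigma> k y"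
proof -
  have "(3 * norm y) powr (-k) \<le> (1 + norm y) powr (-k)"
    using assms by (intro powr_mono2') auto
  then have "norm y powr \<sigma> * (3 * norm y) powr (-k) \<le> gf \<sigma> k y"
    unfolding gf_def by (intro mult_left_mono) auto
  moreover have "norm y powr \<sigma> * (3 * norm y) powr (-k) = 3 powr (-k) * norm y powr (\<sigma> - k)"
    using assms by (simp add: powr_mult powr_add[symmetric] algebra_simps)
  ultimately show ?thesis by simp
qed

lemma ball_mass_const:
  fixes x :: "real^'n"
  assumes "c \<ge> 0" "t \<ge> 0"
  shows "(\<integral>\<^sup>+ y. ennreal c * indicator (ball x t) y \<partial>lebesgue) = ennreal (c * unit_ball_vol (real CARD('n)) * t ^ CARD('n))"
proof -
  have "(\<integral>\<^sup>+ y. ennreal c * indicator (ball x t) y \<partial>lebesgue) = ennreal c * emeasure lebesgue (ball x t)"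
    by (rule nn_integral_cmult_indicator) (rule fmeasurableD[OF lmeasurable_ball])
  also have "\<dots> = ennreal c * ennreal (unit_ball_vol (real CARD('n)) * t ^ CARD('n))"
    using assms by (simp only: emeasure_lebesgue_ball_eq[OF assms(2)])
  also have "\<dots> = ennreal (c * unit_ball_vol (real CARD('n)) * t ^ CARD('n))"
    using assms by (simp add: ennreal_mult[symmetric] mult.assoc del: ennreal_mult)
  finally show ?thesis .
qed

lemma mass_M1:
  fixes x :: "real^'n"
  assumes "k \<ge> 0" "m = k - \<sigma>" "m > 0" "0 < t" "t \<le> norm x / 2"
  shows "ball_mass (gf \<sigma> k) x t \<le> ennreal ((unit_ball_vol (real CARD('n)) * (norm x / 2) powr (-m)) * t powr real CARD('n))"
proof -
  have pt: "ennreal (gf \<sigma> k y) * indicator (ball x t) y \<le> ennreal ((norm x / 2) powr (-m)) * indicator (ball x t) y" for y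
  proof (cases "y \<in> ball x t")
    case True
    have "norm x \<le> norm y + norm (x - y)" by (metis norm_triangle_sub)
    then have ny: "norm x / 2 \<le> norm y" using True assms by (auto simp: dist_norm)
    have "gf \<sigma> k y \<le> norm y powr (-m)" using gf_le_m[OF assms(1)] assms(2) by simp
    also have "\<dots> \<le> (norm x / 2) powr (-m)" using ny assms by (intro powr_mono2') auto
    finally show ?thesis using True by simp
  qed simp
  have "ball_mass (gf \<sigma> k) x t \<le> (\<integral>\<^sup>+ y. ennreal ((norm x / 2) powr (-m)) * indicator (ball x t) y \<partial>lebesgue)"
    unfolding ball_mass_def by (rule nn_integral_mono) (rule pt)
  also have "\<dots> = ennreal ((norm x / 2) powr (-m) * unit_ball_vol (real CARD('n)) * t ^ CARD('n))"
    using assms by (intro ball_mass_const) auto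
  finally show ?thesis using assms by (simp add: powr_realpow mult_ac)
qed

lemma mass_M2:
  fixes x :: "real^'n"
  assumes "k \<ge> 0" "m = k - \<sigma>" "m > 0" "m < real CARD('n)" "0 < t" "norm x \<le> 2 * t"
  shows "ball_mass (gf \<sigma> k) x t \<le> ennreal ((Dc (real CARD('n)) m * 3 powr (real CARD('n) - m)) * t powr (real CARD('n) - m))"
proof -
  have pt: "ennreal (gf \<sigma> k y) * indicator (ball x t) y \<le> ennreal (norm y powr (-m)) * indicator (ball 0 (3*t)) y" for y
  proof (cases "y \<in> ball x t")
    case True
    have "norm y \<le> norm x + norm (y - x)" by (metis norm_triangle_sub)
    then have ny: "norm y < 3 * t" using True assms by (auto simp: dist_norm norm_minus_commute)
    have "gf \<sigma> k y \<le> norm y powr (-m)" using gf_le_m[OF assms(1)] assms(2) by simp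
    then show ?thesis using True ny by simp
  qed simp
  have "ball_mass (gf \<sigma> k) x t \<le> (\<integral>\<^sup>+ y. ennreal (norm y powr (-m)) * indicator (ball 0 (3*t)) (y::real^'n) \<partial>lebesgue)"
    unfolding ball_mass_def by (rule nn_integral_mono) (rule pt)
  also have "\<dots> \<le> ennreal (Dc (real CARD('n)) m * (3*t) powr (real CARD('n) - m))"
    using assms by (intro ball0_powr) auto
  finally show ?thesis using assms by (simp add: powr_mult mult_ac)
qed

lemma mass_M3:
  assumes "k \<ge> 0" "\<sigma> > - real CARD('n)"
  shows "\<exists>E\<ge>0. \<forall>(x::real^'n) t. norm x \<le> 1 \<longrightarrow> 0 < t \<longrightarrow> t \<le> 2 \<longrightarrow>
     ball_mass (gf \<sigma> k) x t \<le> ennreal (E * t powr (real CARD('n) + min \<sigma> 0))"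
proof (cases "\<sigma> \<ge> 0")
  case True
  let ?E = "3 powr \<sigma> * unit_ball_vol (real CARD('n))"
  show ?thesis
  proof (intro exI[of _ ?E] conjI allI impI)
    show "?E \<ge> 0" by simp
    fix x :: "real^'n" and t :: real
    assume x: "norm x \<le> 1" and t: "0 < t" "t \<le> 2"
    have pt: "ennreal (gf \<sigma> k y) * indicator (ball x t) y \<le> ennreal (3 powr \<sigma>) * indicator (ball x t) y" for y
    proof (cases "y \<in> ball x t")
      case yin: True
      have "norm y \<le> norm x + norm (y - x)" by (metis norm_triangle_sub)
      then have ny: "norm y \<le> 3" using yin x t by (auto simp: dist_norm norm_minus_commute)
      have "gf \<sigma> k y \<le> norm y powr \<sigma>" by (rule gf_le_s[OF assms(1)])
      also have "\<dots> \<le> 3 powr \<sigma>" using ny True by (intro powr_mono2) auto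
      finally show ?thesis using yin by simp
    qed simp
    have "ball_mass (gf \<sigma> k) x t \<le> (\<integral>\<^sup>+ y. ennreal (3 powr \<sigma>) * indicator (ball x t) y \<partial>lebesgue)"
      unfolding ball_mass_def by (rule nn_integral_mono) (rule pt)
    also have "\<dots> = ennreal (3 powr \<sigma> * unit_ball_vol (real CARD('n)) * t ^ CARD('n))"
      using t by (intro ball_mass_const) auto
    finally show "ball_mass (gf \<sigma> k) x t \<le> ennreal (?E * t powr (real CARD('n) + min \<sigma> 0))"
      using True t by (simp add: powr_realpow)
  qed
next
  case False
  let ?V = "unit_ball_vol (real CARD('n))"
  let ?D = "Dc (real CARD('n)) (-\<sigma>)"
  have Dnn: "?D \<ge> 0" using False assms by (intro Dc_nonneg) auto
  show ?thesis
  proof (intro exI[of _ "?V + ?D"] conjI allI impI)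
    show "?V + ?D \<ge> 0" using Dnn by simp
    fix x :: "real^'n" and t :: real
    assume x: "norm x \<le> 1" and t: "0 < t" "t \<le> 2"
    have pt: "ennreal (gf \<sigma> k y) * indicator (ball x t) y \<le>
       ennreal (t powr \<sigma>) * indicator (ball x t) y + ennreal (norm y powr (-(-\<sigma>))) * indicator (ball 0 t) y" for y
    proof (cases "y \<in> ball x t")
      case yin: True
      show ?thesis
      proof (cases "norm y \<ge> t")
        case True
        have "gf \<sigma> k y \<le> norm y powr \<sigma>" by (rule gf_le_s[OF assms(1)])
        also have "\<dots> \<le> t powr \<sigma>" using True t False by (intro powr_mono2') auto
        finally show ?thesis using yin by (simp add: add_increasing2)
      next
        case nt: False
        have "gf \<sigma> k y \<le> norm y powr \<sigma>" by (rule gf_le_s[OF assms(1)])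
        then show ?thesis using yin nt by (simp add: add_increasing)
      qed
    qed simp
    have "ball_mass (gf \<sigma> k) x t \<le> (\<integral>\<^sup>+ y. ennreal (t powr \<sigma>) * indicator (ball x t) y +
         ennreal (norm y powr (-(-\<sigma>))) * indicator (ball 0 t) y \<partial>lebesgue)"
      unfolding ball_mass_def by (rule nn_integral_mono) (rule pt)
    also have "\<dots> = (\<integral>\<^sup>+ y. ennreal (t powr \<sigma>) * indicator (ball x t) y \<partial>lebesgue) +
         (\<integral>\<^sup>+ y. ennreal (norm y powr (-(-\<sigma>))) * indicator (ball 0 t) (y::real^'n) \<partial>lebesgue)"
      by (rule nn_integral_add)
        (intro borel_measurable_times_ennreal borel_measurable_indicator fmeasurableD[OF lmeasurable_ball] borel_measurable_const,
         intro borel_measurable_times_ennreal borel_measurable_indicator fmeasurableD[OF lmeasurable_ball], rule measurable_completion, measurable)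
    also have "(\<integral>\<^sup>+ y. ennreal (t powr \<sigma>) * indicator (ball x t) y \<partial>lebesgue) =
        ennreal (t powr \<sigma> * ?V * t ^ CARD('n))"
      using t by (intro ball_mass_const) auto
    also have "(\<integral>\<^sup>+ y. ennreal (norm y powr (-(-\<sigma>))) * indicator (ball 0 t) (y::real^'n) \<partial>lebesgue) \<le>
        ennreal (?D * t powr (real CARD('n) - (-\<sigma>)))"
      using t False assms by (intro ball0_powr) auto
    also have "ennreal (t powr \<sigma> * ?V * t ^ CARD('n)) + ennreal (?D * t powr (real CARD('n) - (-\<sigma>)))
        = ennreal ((?V + ?D) * t powr (real CARD('n) + min \<sigma> 0))"
      using t False Dnn by (simp add: ennreal_plus[symmetric] powr_realpow[symmetric] powr_add[symmetric] algebra_simps del: ennreal_plus)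
    finally show "ball_mass (gf \<sigma> k) x t \<le> ennreal ((?V + ?D) * t powr (real CARD('n) + min \<sigma> 0))"
      by simp
  qed
qed

lemma mass_L1:
  fixes x :: "real^'n"
  assumes "k \<ge> 0" "m = k - \<sigma>" "m > 0" "norm x \<ge> 1" "0 < t" "t \<le> norm x / 2"
  shows "ennreal ((unit_ball_vol (real CARD('n)) * 3 powr (-k) * (3 * norm x / 2) powr (-m)) * t powr real CARD('n)) \<le> ball_mass (gf \<sigma> k) x t"
proof -
  let ?c = "3 powr (-k) * (3 * norm x / 2) powr (-m)"
  have pt: "ennreal ?c * indicator (ball x t) y \<le> ennreal (gf \<sigma> k y) * indicator (ball x t) y" for y
  proof (cases "y \<in> ball x t")
    case True
    have "norm x \<le> norm y + norm (x - y)" by (metis norm_triangle_sub)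
    then have ny: "norm x / 2 \<le> norm y" using True assms by (auto simp: dist_norm)
    have "norm y \<le> norm x + norm (y - x)" by (metis norm_triangle_sub)
    then have ny2: "norm y \<le> 3 * norm x / 2" using True assms by (auto simp: dist_norm norm_minus_commute)
    have "?c \<le> 3 powr (-k) * norm y powr (-m)"
      using ny ny2 assms by (intro mult_left_mono powr_mono2') auto
    also have "\<dots> \<le> gf \<sigma> k y" using gf_ge[OF assms(1), of y \<sigma>] ny assms by simp
    finally show ?thesis using True by (simp add: ennreal_leI)
  qed simp
  have "ennreal (?c * unit_ball_vol (real CARD('n)) * t ^ CARD('n)) = (\<integral>\<^sup>+ y. ennreal ?c * indicator (ball x t) y \<partial>lebesgue)"
    using assms by (intro ball_mass_const[symmetric]) auto
  also have "\<dots> \<le> ball_mass (gf \<sigma> k) x t"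
    unfolding ball_mass_def by (rule nn_integral_mono) (rule pt)
  finally show ?thesis using assms by (simp add: powr_realpow mult_ac)
qed

lemma mass_L2:
  fixes x :: "real^'n"
  assumes "k \<ge> 0" "m = k - \<sigma>" "m > 0" "norm x \<le> 1" "3 \<le> t"
  shows "ennreal (3 powr (-k) * (3 / 2) powr (-m) * unit_ball_vol (real CARD('n)) * (1/2) ^ CARD('n)) \<le> ball_mass (gf \<sigma> k) x t"
proof -
  define z :: "real^'n" where "z = axis undefined 1"
  have nz: "norm z = 1" by (simp add: z_def norm_axis_1)
  let ?c = "3 powr (-k) * (3 / 2) powr (-m)"
  have pt: "ennreal ?c * indicator (ball z (1/2)) y \<le> ennreal (gf \<sigma> k y) * indicator (ball x t) y" for y
  proof (cases "y \<in> ball z (1/2)")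
    case True
    have "norm z \<le> norm y + norm (z - y)" by (metis norm_triangle_sub)
    then have ny: "1/2 \<le> norm y" using True nz by (auto simp: dist_norm)
    have "norm y \<le> norm z + norm (y - z)" by (metis norm_triangle_sub)
    then have ny2: "norm y \<le> 3 / 2" using True nz by (auto simp: dist_norm norm_minus_commute)
    have "norm (y - x) \<le> norm y + norm x" by (rule norm_triangle_ineq4)
    then have yin: "y \<in> ball x t" using ny2 assms by (auto simp: dist_norm norm_minus_commute)
    have "?c \<le> 3 powr (-k) * norm y powr (-m)"
      using ny ny2 assms by (intro mult_left_mono powr_mono2') auto
    also have "\<dots> \<le> gf \<sigma> k y" using gf_ge[OF assms(1), of y \<sigma>] ny assms by simp
    finally show ?thesis using yin True by (simp add: ennreal_leI)
  qed simp
  have "ennreal (?c * unit_ball_vol (real CARD('n)) * (1/2) ^ CARD('n)) = (\<integral>\<^sup>+ y. ennreal ?c * indicator (ball z (1/2)) y \<partial>lebesgue)"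
    by (intro ball_mass_const[symmetric]) auto
  also have "\<dots> \<le> ball_mass (gf \<sigma> k) x t"
    unfolding ball_mass_def by (rule nn_integral_mono) (rule pt)
  finally show ?thesis .
qed



lemma wolff_lower_gen:
  fixes f :: "real^'n \<Rightarrow> real" and \<beta> \<gamma> :: real
  defines "e \<equiv> real CARD('n) - \<beta> * \<gamma>"
  assumes g: "\<gamma> > 1" and R: "R > 0" and K: "K \<ge> 0"
    and b1: "b1 = (c - e) * (1/(\<gamma>-1))" "b1 > 0"
    and M: "\<And>t. 0 < t \<Longrightarrow> t \<le> R \<Longrightarrow> ennreal (K * t powr c) \<le> ball_mass f x t"
  shows "ennreal (K powr (1/(\<gamma>-1)) * R powr b1 / b1) \<le> wolff \<beta> \<gamma> f x"
proof -
  let ?a = "1/(\<gamma>-1)"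
  have pt: "ennreal (K powr ?a * t powr (b1 - 1)) * indicator {0..R} t \<le> wint \<beta> \<gamma> f x t * indicator {0<..} t" for t
  proof (cases "0 < t \<and> t \<le> R")
    case True
    then have t: "t > 0" "t \<le> R" by auto
    have "ennreal (K powr ?a * t powr (b1 - 1)) = ennreal ((K * t powr c / t powr e) powr ?a / t)"
      using powr_alg[OF K t(1)] b1 by simp
    also have "\<dots> \<le> wint \<beta> \<gamma> f x t"
      unfolding e_def using t K g M[OF t] by (intro wint_lower) auto
    finally show ?thesis using t by simp
  next
    case False
    then show ?thesis by (auto simp: indicator_def)
  qed
  have "(\<integral>\<^sup>+ t. ennreal (K powr ?a * t powr (b1 - 1)) * indicator {0..R} t \<partial>lborel) \<le> wolff \<beta> \<gamma> f x"
    unfolding wolff_wint by (intro nn_integral_mono pt)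
  moreover have "(\<integral>\<^sup>+ t. ennreal (K powr ?a * t powr (b1 - 1)) * indicator {0..R} t \<partial>lborel)
     = ennreal (K powr ?a) * (\<integral>\<^sup>+ t. ennreal (t powr (b1 - 1)) * indicator {0..R} t \<partial>lborel)"
    by (subst nn_integral_cmult[symmetric]) (auto simp: ennreal_mult mult.assoc)
  moreover have "\<dots> = ennreal (K powr ?a * (R powr b1 / b1))"
    using int_pow0[of b1 R] b1(2) R by (simp add: ennreal_mult[symmetric] del: ennreal_mult)
  ultimately show ?thesis by simp
qed

lemma wolff_lower_const:
  fixes f :: "real^'n \<Rightarrow> real" and \<beta> \<gamma> :: real
  assumes g: "\<gamma> > 1" and e: "real CARD('n) - \<beta> * \<gamma> > 0" and c: "c \<ge> 0"
    and M: "\<And>t. 3 \<le> t \<Longrightarrow> ennreal c \<le> ball_mass f x t"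
  shows "ennreal ((c / 4 powr (real CARD('n) - \<beta> * \<gamma>)) powr (1/(\<gamma>-1)) / 4) \<le> wolff \<beta> \<gamma> f x"
proof -
  let ?e = "real CARD('n) - \<beta> * \<gamma>"
  let ?L = "(c / 4 powr ?e) powr (1/(\<gamma>-1)) / 4"
  have pt: "ennreal ?L * indicator {3..4} t \<le> wint \<beta> \<gamma> f x t * indicator {0<..} t" for t
  proof (cases "3 \<le> t \<and> t \<le> 4")
    case True
    have "c / 4 powr ?e \<le> c / t powr ?e"
      using True e c by (intro divide_left_mono powr_mono2 mult_pos_pos) auto
    then have "(c / 4 powr ?e) powr (1/(\<gamma>-1)) \<le> (c / t powr ?e) powr (1/(\<gamma>-1))"
      using g c by (intro powr_mono2) auto
    then have "?L \<le> (c / t powr ?e) powr (1/(\<gamma>-1)) / t"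
      using True order_trans[OF divide_left_mono[of t 4 "(c / 4 powr ?e) powr (1/(\<gamma>-1))"]
         divide_right_mono[of "(c / 4 powr ?e) powr (1/(\<gamma>-1))" "(c / t powr ?e) powr (1/(\<gamma>-1))" t]]
      by simp
    then have "ennreal ?L \<le> ennreal ((c / t powr ?e) powr (1/(\<gamma>-1)) / t)" by (rule ennreal_leI)
    also have "\<dots> \<le> wint \<beta> \<gamma> f x t" using True c g M[of t] by (intro wint_lower) auto
    finally have "ennreal ?L \<le> wint \<beta> \<gamma> f x t" .
    then show ?thesis using True by simp
  next
    case False
    then show ?thesis by (auto simp: indicator_def)
  qed
  have "(\<integral>\<^sup>+ t. ennreal ?L * indicator {3..4::real} t \<partial>lborel) \<le> wolff \<beta> \<gamma> f x"
    unfolding wolff_wint by (intro nn_integral_mono pt)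
  moreover have "(\<integral>\<^sup>+ t. ennreal ?L * indicator {3..4::real} t \<partial>lborel) = ennreal ?L"
    by (simp add: nn_integral_cmult_indicator)
  ultimately show ?thesis by simp
qed



lemma powr_prod_alg:
  fixes K R :: real
  assumes "K \<ge> 0" "R > 0"
  shows "(K * R powr u) powr a * R powr v = K powr a * R powr (u*a + v)"
  using assms by (simp add: powr_mult powr_powr powr_add)

lemma wolff_two_sided:
  fixes \<beta> \<gamma> \<sigma> m :: real
  assumes b: "\<beta> > 0" and g: "\<gamma> > 1" and bn: "\<beta>*\<gamma> < real CARD('n)" and s: "\<sigma> > -(\<beta>*\<gamma>)"
    and m1: "\<beta>*\<gamma> < m" and m2: "m < real CARD('n)"
  shows "\<exists>Clo>0. \<exists>Cup>0. \<forall>x::real^'n.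
     ennreal (Clo * (1+norm x) powr (-((m - \<beta>*\<gamma>)/(\<gamma>-1)))) \<le> wolff \<beta> \<gamma> (gf \<sigma> (m+\<sigma>)) x \<and>
     wolff \<beta> \<gamma> (gf \<sigma> (m+\<sigma>)) x \<le> ennreal (Cup * (1+norm x) powr (-((m - \<beta>*\<gamma>)/(\<gamma>-1))))"
proof -
  define N where "N = real CARD('n)"
  define a where "a = 1/(\<gamma>-1)"
  define a0 where "a0 = (m - \<beta>*\<gamma>)/(\<gamma>-1)"
  define k where "k = m + \<sigma>"
  define V where "V = unit_ball_vol N"
  define K2 where "K2 = Dc N m * 3 powr (N - m)"
  have bg: "\<beta>*\<gamma> > 0" using b g by simp
  have a: "a > 0" using g by (simp add: a_def)
  have a0: "a0 > 0" using g m1 by (simp add: a0_def)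
  have a0a: "a0 = (m - \<beta>*\<gamma>) * a" by (simp add: a0_def a_def)
  have k: "k \<ge> 0" "m = k - \<sigma>" using s m1 by (auto simp: k_def)
  have m0: "m > 0" using bg m1 by simp
  have N0: "N \<ge> 0" by (simp add: N_def)
  have V: "V > 0" using N0 by (simp add: V_def)
  have K2: "K2 \<ge> 0" using m2 by (simp add: K2_def N_def Dc_nonneg)
  have sN: "\<sigma> > - real CARD('n)" using s bn by simp
  obtain E where E: "E \<ge> 0" and EM: "\<And>(x::real^'n) t. norm x \<le> 1 \<Longrightarrow> 0 < t \<Longrightarrow> t \<le> 2 \<Longrightarrow>
     ball_mass (gf \<sigma> k) x t \<le> ennreal (E * t powr (real CARD('n) + min \<sigma> 0))"
    using mass_M3[OF k(1) sN] by blast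
  have e_eq: "real CARD('n) - \<beta>*\<gamma> = N - \<beta>*\<gamma>" by (simp add: N_def)
  define Cu1 where "Cu1 = (V powr a / (\<beta>*\<gamma>*a) + K2 powr a / a0) * 4 powr a0"
  have up1: "wolff \<beta> \<gamma> (gf \<sigma> k) x \<le> ennreal (Cu1 * (1+norm x) powr (-a0))" if x: "norm x \<ge> 1" for x :: "real^'n"
  proof -
    define R where "R = norm x / 2"
    have R: "R > 0" using x unfolding R_def by linarith
    have M1x: "ball_mass (gf \<sigma> k) x t \<le> ennreal (V * R powr - m * t powr real CARD('n))"
      if t: "0 < t" "t \<le> R" for t
      using mass_M1[OF k(1) k(2) m0 t(1)] t by (simp add: R_def V_def N_def)
    have M2x: "ball_mass (gf \<sigma> k) x t \<le> ennreal (K2 * t powr (real CARD('n) - m))"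
      if t: "R \<le> t" for t
      using mass_M2[OF k(1) k(2) m0 m2, of t x] t R by (simp add: R_def K2_def N_def)
    have "wolff \<beta> \<gamma> (gf \<sigma> k) x \<le> ennreal ((V * R powr (-m)) powr (1/(\<gamma>-1)) * R powr (\<beta>*\<gamma>*(1/(\<gamma>-1))) / (\<beta>*\<gamma>*(1/(\<gamma>-1)))
          + K2 powr (1/(\<gamma>-1)) * R powr (-a0) / a0)"
      by (rule wolff_upper_gen[OF g R _ K2 _ _ _ a0 M1x M2x]) (use V bg g in \<open>auto simp: a0_def\<close>)
    then have "wolff \<beta> \<gamma> (gf \<sigma> k) x \<le> ennreal ((V * R powr (-m)) powr a * R powr (\<beta>*\<gamma>*a) / (\<beta>*\<gamma>*a)
          + K2 powr a * R powr (-a0) / a0)" by (simp add: a_def)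
    also have "(V * R powr (-m)) powr a * R powr (\<beta>*\<gamma>*a) = V powr a * R powr (-a0)"
    proof -
      have ex: "(-m)*a + \<beta>*\<gamma>*a = -a0" by (simp add: a0a algebra_simps)
      show ?thesis using powr_prod_alg[of V R "-m" a "\<beta>*\<gamma>*a"] V R unfolding ex by simp
    qed
    also have "V powr a * R powr (-a0) / (\<beta>*\<gamma>*a) + K2 powr a * R powr (-a0) / a0
        = (V powr a / (\<beta>*\<gamma>*a) + K2 powr a / a0) * R powr (-a0)"
      by (simp add: algebra_simps)
    also have "\<dots> \<le> Cu1 * (1+norm x) powr (-a0)"
    proof -
      have "R powr (-a0) \<le> ((1 + norm x)/4) powr (-a0)"
        using x a0 by (intro powr_mono2') (auto simp: R_def)
      also have "\<dots> = 4 powr a0 * (1+norm x) powr (-a0)"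
        using x by (simp add: powr_divide powr_minus divide_simps)
      finally have "R powr (-a0) \<le> 4 powr a0 * (1+norm x) powr (-a0)" .
      moreover have "V powr a / (\<beta>*\<gamma>*a) + K2 powr a / a0 \<ge> 0" using a a0 bg by simp
      ultimately show ?thesis unfolding Cu1_def
        by (metis (no_types, lifting) mult.assoc mult_left_mono)
    qed
    finally show ?thesis by (simp add: ennreal_leI)
  qed

  define s0 where "s0 = min \<sigma> 0"
  define b1 where "b1 = (\<beta>*\<gamma> + s0) * a"
  have b1: "b1 > 0" using s bg a by (simp add: b1_def s0_def)
  define Cc where "Cc = E powr a * 2 powr b1 / b1 + K2 powr a * 2 powr (-a0) / a0"
  have Cc: "Cc \<ge> 0" using b1 a0 by (simp add: Cc_def)
  have up2: "wolff \<beta> \<gamma> (gf \<sigma> k) x \<le> ennreal (Cc * 2 powr a0 * (1+norm x) powr (-a0))" if x: "norm x \<le> 1" for x :: "real^'n"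
  proof -
    have M1x: "ball_mass (gf \<sigma> k) x t \<le> ennreal (E * t powr (real CARD('n) + s0))"
      if t: "0 < t" "t \<le> 2" for t
      using EM[OF x t] by (simp add: s0_def)
    have M2x: "ball_mass (gf \<sigma> k) x t \<le> ennreal (K2 * t powr (real CARD('n) - m))"
      if t: "2 \<le> t" for t
      using mass_M2[OF k(1) k(2) m0 m2, of t x] t x by (simp add: K2_def N_def)
    have "wolff \<beta> \<gamma> (gf \<sigma> k) x \<le> ennreal (E powr (1/(\<gamma>-1)) * 2 powr b1 / b1
          + K2 powr (1/(\<gamma>-1)) * 2 powr (-a0) / a0)"
      by (rule wolff_upper_gen[OF g _ E K2 _ b1 _ a0 M1x M2x]) (auto simp: a0_def b1_def a_def algebra_simps)
    then have W: "wolff \<beta> \<gamma> (gf \<sigma> k) x \<le> ennreal Cc" by (simp add: Cc_def a_def)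
    have "1 \<le> 2 powr a0 * (1+norm x) powr (-a0)"
    proof -
      have "2 powr (-a0) \<le> (1+norm x) powr (-a0)" using x a0 by (intro powr_mono2') (auto intro: add_pos_nonneg)
      then have "2 powr a0 * 2 powr (-a0) \<le> 2 powr a0 * (1+norm x) powr (-a0)" by (intro mult_left_mono) auto
      then show ?thesis by (simp add: powr_add[symmetric])
    qed
    then have "Cc \<le> Cc * (2 powr a0 * (1+norm x) powr (-a0))" using Cc
      by (metis mult.right_neutral mult_left_mono)
    then show ?thesis using W by (simp add: ennreal_leI mult.assoc order_trans)
  qed
  define K0 where "K0 = V * 3 powr (-k) * (3/2) powr (-m)"
  have K0: "K0 > 0" using V by (simp add: K0_def)
  define Cl1 where "Cl1 = K0 powr a * 2 powr (-(\<beta>*\<gamma>*a)) / (\<beta>*\<gamma>*a)"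
  have Cl1: "Cl1 > 0" using K0 bg a by (simp add: Cl1_def)
  have low1: "ennreal (Cl1 * (1+norm x) powr (-a0)) \<le> wolff \<beta> \<gamma> (gf \<sigma> k) x" if x: "norm x \<ge> 1" for x :: "real^'n"
  proof -
    define R where "R = norm x / 2"
    have R: "R > 0" using x unfolding R_def by linarith
    have nx: "norm x > 0" using x by linarith
    have M: "ennreal ((K0 * norm x powr (-m)) * t powr real CARD('n)) \<le> ball_mass (gf \<sigma> k) x t"
      if t: "0 < t" "t \<le> R" for t
    proof -
      have "(3 * norm x / 2) powr (-m) = (3/2) powr (-m) * norm x powr (-m)"
        using nx by (simp add: powr_mult[symmetric])
      then show ?thesis using mass_L1[OF k(1) k(2) m0 x t(1)] t
        by (simp add: R_def K0_def V_def N_def mult_ac)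
    qed
    have "ennreal ((K0 * norm x powr (-m)) powr (1/(\<gamma>-1)) * R powr (\<beta>*\<gamma>*(1/(\<gamma>-1))) / (\<beta>*\<gamma>*(1/(\<gamma>-1))))
        \<le> wolff \<beta> \<gamma> (gf \<sigma> k) x"
      by (rule wolff_lower_gen[OF g R _ _ _ M]) (use K0 bg g in auto)
    moreover have "(K0 * norm x powr (-m)) powr a * R powr (\<beta>*\<gamma>*a) / (\<beta>*\<gamma>*a) = Cl1 * norm x powr (-a0)"
    proof -
      have ex: "(-m)*a + \<beta>*\<gamma>*a = -a0" by (simp add: a0a algebra_simps)
      have A: "(K0 * norm x powr (-m)) powr a = K0 powr a * norm x powr ((-m)*a)"
        using K0 nx by (simp add: powr_mult powr_powr)
      have B: "R powr (\<beta>*\<gamma>*a) = norm x powr (\<beta>*\<gamma>*a) * 2 powr (-(\<beta>*\<gamma>*a))"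
        using nx by (simp add: R_def powr_divide powr_minus divide_simps)
      have C: "norm x powr ((-m)*a) * norm x powr (\<beta>*\<gamma>*a) = norm x powr (-a0)"
        by (simp only: powr_add[symmetric] ex)
      show ?thesis unfolding Cl1_def A B C[symmetric] by (simp only: ac_simps times_divide_eq_left times_divide_eq_right)
    qed
    moreover have "Cl1 * (1+norm x) powr (-a0) \<le> Cl1 * norm x powr (-a0)"
      using Cl1 nx a0 by (intro mult_left_mono powr_mono2') auto
    ultimately show ?thesis unfolding a_def using order_trans[OF ennreal_leI] by (metis (no_types, lifting))
  qed
  define c2 where "c2 = 3 powr (-k) * (3 / 2) powr (-m) * V * (1/2) ^ CARD('n)"
  have c2: "c2 > 0" using V by (simp add: c2_def)
  define L where "L = (c2 / 4 powr (real CARD('n) - \<beta> * \<gamma>)) powr (1/(\<gamma>-1)) / 4"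
  have L: "L > 0" using c2 by (simp add: L_def)
  have low2: "ennreal (L * (1+norm x) powr (-a0)) \<le> wolff \<beta> \<gamma> (gf \<sigma> k) x" if x: "norm x \<le> 1" for x :: "real^'n"
  proof -
    have M: "ennreal c2 \<le> ball_mass (gf \<sigma> k) x t" if t: "3 \<le> t" for t
      using mass_L2[OF k(1) k(2) m0 x t] by (simp add: c2_def V_def N_def)
    have "ennreal L \<le> wolff \<beta> \<gamma> (gf \<sigma> k) x"
      unfolding L_def by (rule wolff_lower_const[OF g _ _ M]) (use bn c2 in auto)
    moreover have "L * (1+norm x) powr (-a0) \<le> L"
    proof -
      have "(1+norm x) powr (-a0) \<le> 1 powr (-a0)" using a0 by (intro powr_mono2') auto
      then show ?thesis using L by (simp add: mult_left_le)
    qed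
    ultimately show ?thesis using order_trans[OF ennreal_leI] by blast
  qed
  have P1: "min Cl1 L > 0" using Cl1 L by simp
  have Cu1: "Cu1 \<ge> 0" using a a0 bg by (simp add: Cu1_def)
  then have P2: "Cu1 + Cc * 2 powr a0 + 1 > 0" using Cc by (simp add: add_nonneg_pos)
  have "\<forall>x::real^'n.
     ennreal (min Cl1 L * (1+norm x) powr (-((m - \<beta>*\<gamma>)/(\<gamma>-1)))) \<le> wolff \<beta> \<gamma> (gf \<sigma> (m+\<sigma>)) x \<and>
     wolff \<beta> \<gamma> (gf \<sigma> (m+\<sigma>)) x \<le> ennreal ((Cu1 + Cc * 2 powr a0 + 1) * (1+norm x) powr (-((m - \<beta>*\<gamma>)/(\<gamma>-1))))"
  proof (intro allI conjI)
    fix x :: "real^'n"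
    have pw: "(1+norm x) powr (-a0) \<ge> 0" by simp
    have kk: "m + \<sigma> = k" by (simp add: k_def)
    show "ennreal (min Cl1 L * (1+norm x) powr (-((m - \<beta>*\<gamma>)/(\<gamma>-1)))) \<le> wolff \<beta> \<gamma> (gf \<sigma> (m+\<sigma>)) x"
      unfolding kk a0_def[symmetric]
    proof (cases "norm x \<ge> 1")
      case True
      have "min Cl1 L * (1+norm x) powr (-a0) \<le> Cl1 * (1+norm x) powr (-a0)" using pw by (intro mult_right_mono) auto
      then show "ennreal (min Cl1 L * (1+norm x) powr (-a0)) \<le> wolff \<beta> \<gamma> (gf \<sigma> k) x"
        using order_trans[OF ennreal_leI low1[OF True]] by blast
    next
      case False
      have "min Cl1 L * (1+norm x) powr (-a0) \<le> L * (1+norm x) powr (-a0)" using pw by (intro mult_right_mono) auto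
      then show "ennreal (min Cl1 L * (1+norm x) powr (-a0)) \<le> wolff \<beta> \<gamma> (gf \<sigma> k) x"
        using order_trans[OF ennreal_leI low2[of x]] False by simp
    qed
    show "wolff \<beta> \<gamma> (gf \<sigma> (m+\<sigma>)) x \<le> ennreal ((Cu1 + Cc * 2 powr a0 + 1) * (1+norm x) powr (-((m - \<beta>*\<gamma>)/(\<gamma>-1))))"
      unfolding kk a0_def[symmetric]
    proof (cases "norm x \<ge> 1")
      case True
      have "Cu1 * (1+norm x) powr (-a0) \<le> (Cu1 + Cc * 2 powr a0 + 1) * (1+norm x) powr (-a0)"
        using pw Cc by (intro mult_right_mono) auto
      then show "wolff \<beta> \<gamma> (gf \<sigma> k) x \<le> ennreal ((Cu1 + Cc * 2 powr a0 + 1) * (1+norm x) powr (-a0))"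
        using order_trans[OF up1[OF True] ennreal_leI] by blast
    next
      case False
      have "Cc * 2 powr a0 * (1+norm x) powr (-a0) \<le> (Cu1 + Cc * 2 powr a0 + 1) * (1+norm x) powr (-a0)"
        using pw Cu1 by (intro mult_right_mono) auto
      then show "wolff \<beta> \<gamma> (gf \<sigma> k) x \<le> ennreal ((Cu1 + Cc * 2 powr a0 + 1) * (1+norm x) powr (-a0))"
        using order_trans[OF up2[of x] ennreal_leI] False by simp
    qed
  qed
  then show ?thesis using P1 P2 by blast
qed



lemma L1_loc_pow: "L1_loc (\<lambda>x::real^'n. (1 + norm x) powr (-a))"
  unfolding L1_loc_def
proof (intro conjI allI impI)
  show "(\<lambda>x::real^'n. (1 + norm x) powr (-a)) \<in> borel_measurable lebesgue"
    by (rule measurable_completion) measurable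
  fix K :: "(real^'n) set" assume K: "compact K"
  obtain b where b: "K \<subseteq> cbox (-b) b" using bounded_subset_cbox_symmetric[OF compact_imp_bounded[OF K]] by blast
  have "continuous_on (cbox (-b) b) (\<lambda>x::real^'n. (1 + norm x) powr (-a))"
    by (intro continuous_intros) (smt (verit) norm_ge_zero)
  then have "(\<lambda>x::real^'n. (1 + norm x) powr (-a)) absolutely_integrable_on cbox (-b) b"
    by (rule absolutely_integrable_continuous)
  then show "set_integrable lebesgue K (\<lambda>x::real^'n. (1 + norm x) powr (-a))"
    using set_integrable_subset[where f="\<lambda>x::real^'n. (1 + norm x) powr (-a)" and M=lebesgue and A="cbox (-b) b" and B=K]
      fmeasurableD[OF lmeasurable_compact[OF K]] b by blast
qed

lemma solve_eq:
  fixes u :: "real^'n \<Rightarrow> real" and W :: "real^'n \<Rightarrow> ennreal"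
  assumes Clo: "Clo > 0" and Cup: "Cup > 0" and u: "\<And>x. u x > 0"
    and B: "\<And>x. ennreal (Clo * u x) \<le> W x \<and> W x \<le> ennreal (Cup * u x)"
  shows "double_bounded (\<lambda>x. u x / enn2real (W x)) \<and> (\<forall>x. ennreal (u x) = ennreal (u x / enn2real (W x)) * W x)"
proof -
  have pts: "1 / Cup \<le> u x / enn2real (W x) \<and> u x / enn2real (W x) \<le> 1 / Clo \<and>
     ennreal (u x) = ennreal (u x / enn2real (W x)) * W x" for x
  proof -
    have fin: "W x < top" using B[of x] by (metis ennreal_less_top le_less_trans not_le top.not_eq_extremum)
    define w where "w = enn2real (W x)"
    have Ww: "W x = ennreal w" using fin by (simp add: w_def ennreal_enn2real)
    have w0: "w \<ge> 0" by (simp add: w_def)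
    have lo: "Clo * u x \<le> w" using B[of x] w0 unfolding Ww by simp
    have hi: "w \<le> Cup * u x" using B[of x] Cup u[of x] unfolding Ww
      by (simp add: ennreal_le_iff2) (smt (verit) mult_pos_pos)
    have wpos: "w > 0" using lo Clo u[of x] by (smt (verit) mult_pos_pos)
    have "1 / Cup \<le> u x / w" using hi wpos Cup u[of x] by (simp add: field_simps)
    moreover have "u x / w \<le> 1 / Clo" using lo wpos Clo u[of x] by (simp add: field_simps)
    moreover have "ennreal (u x) = ennreal (u x / w) * ennreal w"
      using wpos u[of x] by (simp add: ennreal_mult[symmetric] del: ennreal_mult)
    ultimately show ?thesis unfolding w_def[symmetric] using Ww by simp
  qed
  have "double_bounded (\<lambda>x. u x / enn2real (W x))"
    unfolding double_bounded_def
  proof (intro exI[of _ "max Cup (1/Clo)"] conjI allI)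
    show "max Cup (1/Clo) > 0" using Cup by simp
    fix x
    have "1 / max Cup (1/Clo) \<le> 1 / Cup" using Cup by (simp add: frac_le)
    then show "1 / max Cup (1 / Clo) \<le> u x / enn2real (W x)" using pts[of x] by linarith
    show "u x / enn2real (W x) \<le> max Cup (1 / Clo)" using pts[of x] by linarith
  qed
  then show ?thesis using pts by blast
qed



lemma q0_pos:
  assumes "\<beta> > 0" "\<gamma> > 1" "p > 0" "q > 0" "\<sigma>1 > -(\<beta>*\<gamma>)" "\<sigma>2 > -(\<beta>*\<gamma>)" "p*q > (\<gamma>-1)^2"
  shows "q0 \<beta> \<gamma> p q \<sigma>1 \<sigma>2 > 0"
proof -
  have e: "\<beta> * \<gamma> * (\<gamma> - 1 + q) + (\<gamma> - 1) * \<sigma>1 + \<sigma>2 * q = (\<gamma>-1)*(\<sigma>1 + \<beta>*\<gamma>) + q*(\<sigma>2+\<beta>*\<gamma>)"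
    by (simp add: algebra_simps)
  have "(\<gamma>-1)*(\<sigma>1 + \<beta>*\<gamma>) > 0" "q*(\<sigma>2+\<beta>*\<gamma>) > 0" using assms by auto
  then show ?thesis unfolding q0_def e using assms by (intro divide_pos_pos add_pos_pos) auto
qed

lemma p0_pos:
  assumes "\<beta> > 0" "\<gamma> > 1" "p > 0" "q > 0" "\<sigma>1 > -(\<beta>*\<gamma>)" "\<sigma>2 > -(\<beta>*\<gamma>)" "p*q > (\<gamma>-1)^2"
  shows "p0 \<beta> \<gamma> p q \<sigma>1 \<sigma>2 > 0"
proof -
  have e: "\<beta> * \<gamma> * (\<gamma> - 1 + p) + (\<gamma> - 1) * \<sigma>2 + \<sigma>1 * p = (\<gamma>-1)*(\<sigma>2 + \<beta>*\<gamma>) + p*(\<sigma>1+\<beta>*\<gamma>)"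
    by (simp add: algebra_simps)
  have "(\<gamma>-1)*(\<sigma>2 + \<beta>*\<gamma>) > 0" "p*(\<sigma>1+\<beta>*\<gamma>) > 0" using assms by auto
  then show ?thesis unfolding p0_def e using assms by (intro divide_pos_pos add_pos_pos) auto
qed

lemma ident1:
  assumes "p*q > (\<gamma>-1)^2"
  shows "p0 \<beta> \<gamma> p q \<sigma>1 \<sigma>2 * q = \<beta>*\<gamma> + q0 \<beta> \<gamma> p q \<sigma>1 \<sigma>2 * (\<gamma>-1) + \<sigma>1"
proof -
  have D: "p*q - (\<gamma>-1)^2 \<noteq> 0" using assms by simp
  show ?thesis unfolding p0_def q0_def using D
    by (simp add: field_simps power2_eq_square)
qed

lemma ident2:
  assumes "p*q > (\<gamma>-1)^2"
  shows "q0 \<beta> \<gamma> p q \<sigma>1 \<sigma>2 * p = \<beta>*\<gamma> + p0 \<beta> \<gamma> p q \<sigma>1 \<sigma>2 * (\<gamma>-1) + \<sigma>2"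
proof -
  have D: "p*q - (\<gamma>-1)^2 \<noteq> 0" using assms by simp
  show ?thesis unfolding p0_def q0_def using D
    by (simp add: field_simps power2_eq_square)
qed

theorem theorem3:
  fixes \<beta> \<gamma> p q \<sigma>1 \<sigma>2 :: real
  assumes "CARD('n::finite) \<ge> 3"
    and "\<beta> > 0" and "1 < \<gamma>" and "\<gamma> \<le> 2" and "\<beta> * \<gamma> < real CARD('n)"
    and "p > 0" and "q > 0"
    and "\<sigma>1 > - (\<beta> * \<gamma>)" and "\<sigma>2 > - (\<beta> * \<gamma>)"
    and "p * q > (\<gamma> - 1)^2"
    and "max (q0 \<beta> \<gamma> p q \<sigma>1 \<sigma>2) (p0 \<beta> \<gamma> p q \<sigma>1 \<sigma>2)
           < (real CARD('n) - \<beta> * \<gamma>) / (\<gamma> - 1)"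
  shows "\<exists>(c1 :: real^'n \<Rightarrow> real) c2. double_bounded c1 \<and> double_bounded c2 \<and>
           (\<exists>u v. positive_solution \<beta> \<gamma> p q \<sigma>1 \<sigma>2 c1 c2 u v)"
proof -
  note b = assms(2) and g = assms(3) and bn = assms(5) and pp = assms(6) and qq = assms(7)
    and s1 = assms(8) and s2 = assms(9) and pq = assms(10) and mx = assms(11)
  define Q where "Q = q0 \<beta> \<gamma> p q \<sigma>1 \<sigma>2"
  define P where "P = p0 \<beta> \<gamma> p q \<sigma>1 \<sigma>2"
  have Q: "Q > 0" unfolding Q_def using q0_pos[OF b g pp qq s1 s2 pq] .
  have P: "P > 0" unfolding P_def using p0_pos[OF b g pp qq s1 s2 pq] .
  have g1: "\<gamma> - 1 > 0" using g by simp
  have Qlt: "Q * (\<gamma>-1) < real CARD('n) - \<beta>*\<gamma>"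
    using mx g1 by (simp add: Q_def pos_less_divide_eq)
  have Plt: "P * (\<gamma>-1) < real CARD('n) - \<beta>*\<gamma>"
    using mx g1 by (simp add: P_def pos_less_divide_eq)
  define m1 where "m1 = \<beta>*\<gamma> + Q*(\<gamma>-1)"
  define m2 where "m2 = \<beta>*\<gamma> + P*(\<gamma>-1)"
  have m1: "\<beta>*\<gamma> < m1" "m1 < real CARD('n)" using Q g1 Qlt by (auto simp: m1_def)
  have m2: "\<beta>*\<gamma> < m2" "m2 < real CARD('n)" using P g1 Plt by (auto simp: m2_def)
  have a1: "(m1 - \<beta>*\<gamma>)/(\<gamma>-1) = Q" using g1 by (simp add: m1_def)
  have a2: "(m2 - \<beta>*\<gamma>)/(\<gamma>-1) = P" using g1 by (simp add: m2_def)
  define u :: "real^'n \<Rightarrow> real" where "u = (\<lambda>x. (1 + norm x) powr (-Q))"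
  define v :: "real^'n \<Rightarrow> real" where "v = (\<lambda>x. (1 + norm x) powr (-P))"
  have upos: "u x > 0" for x
    unfolding u_def by (smt (verit) norm_ge_zero powr_gt_zero)
  have vpos: "v x > 0" for x
    unfolding v_def by (smt (verit) norm_ge_zero powr_gt_zero)
  have f1: "(\<lambda>y. norm y powr \<sigma>1 * v y powr q) = gf \<sigma>1 (m1 + \<sigma>1)"
  proof
    fix y :: "real^'n"
    have "v y powr q = (1 + norm y) powr (-(m1 + \<sigma>1))"
      using ident1[OF pq, of \<beta> \<sigma>1 \<sigma>2] unfolding v_def
      by (simp add: powr_powr m1_def P_def Q_def)
    then show "norm y powr \<sigma>1 * v y powr q = gf \<sigma>1 (m1 + \<sigma>1) y" by (simp add: gf_def)
  qed
  have f2: "(\<lambda>y. norm y powr \<sigma>2 * u y powr p) = gf \<sigma>2 (m2 + \<sigma>2)"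
  proof
    fix y :: "real^'n"
    have "u y powr p = (1 + norm y) powr (-(m2 + \<sigma>2))"
      using ident2[OF pq, of \<beta> \<sigma>1 \<sigma>2] unfolding u_def
      by (simp add: powr_powr m2_def P_def Q_def)
    then show "norm y powr \<sigma>2 * u y powr p = gf \<sigma>2 (m2 + \<sigma>2) y" by (simp add: gf_def)
  qed
  obtain Clo1 Cup1 where C1: "Clo1 > 0" "Cup1 > 0" and B1: "\<And>x::real^'n.
     ennreal (Clo1 * (1+norm x) powr (-((m1 - \<beta>*\<gamma>)/(\<gamma>-1)))) \<le> wolff \<beta> \<gamma> (gf \<sigma>1 (m1+\<sigma>1)) x \<and>
     wolff \<beta> \<gamma> (gf \<sigma>1 (m1+\<sigma>1)) x \<le> ennreal (Cup1 * (1+norm x) powr (-((m1 - \<beta>*\<gamma>)/(\<gamma>-1))))"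
    using wolff_two_sided[OF b g bn s1 m1] by blast
  obtain Clo2 Cup2 where C2: "Clo2 > 0" "Cup2 > 0" and B2: "\<And>x::real^'n.
     ennreal (Clo2 * (1+norm x) powr (-((m2 - \<beta>*\<gamma>)/(\<gamma>-1)))) \<le> wolff \<beta> \<gamma> (gf \<sigma>2 (m2+\<sigma>2)) x \<and>
     wolff \<beta> \<gamma> (gf \<sigma>2 (m2+\<sigma>2)) x \<le> ennreal (Cup2 * (1+norm x) powr (-((m2 - \<beta>*\<gamma>)/(\<gamma>-1))))"
    using wolff_two_sided[OF b g bn s2 m2] by blast
  let ?W1 = "\<lambda>x. wolff \<beta> \<gamma> (\<lambda>y. norm y powr \<sigma>1 * v y powr q) x"
  let ?W2 = "\<lambda>x. wolff \<beta> \<gamma> (\<lambda>y. norm y powr \<sigma>2 * u y powr p) x"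
  have B1': "ennreal (Clo1 * u x) \<le> ?W1 x \<and> ?W1 x \<le> ennreal (Cup1 * u x)" for x
    using B1[of x] unfolding f1 a1 u_def by simp
  have B2': "ennreal (Clo2 * v x) \<le> ?W2 x \<and> ?W2 x \<le> ennreal (Cup2 * v x)" for x
    using B2[of x] unfolding f2 a2 v_def by simp
  note S1 = solve_eq[where u=u and W="?W1", OF C1(1) C1(2) upos B1']
  note S2 = solve_eq[where u=v and W="?W2", OF C2(1) C2(2) vpos B2']
  have Lu: "L1_loc u" unfolding u_def by (rule L1_loc_pow)
  have Lv: "L1_loc v" unfolding v_def by (rule L1_loc_pow)
  have "positive_solution \<beta> \<gamma> p q \<sigma>1 \<sigma>2 (\<lambda>x. u x / enn2real (?W1 x)) (\<lambda>x. v x / enn2real (?W2 x)) u v"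
    unfolding positive_solution_def
  proof (intro conjI allI AE_I2)
    show "L1_loc u" "L1_loc v" by (fact Lu, fact Lv)
    fix x
    show "0 < u x" "0 < v x" by (fact upos, fact vpos)
    show "ennreal (u x) = ennreal (u x / enn2real (?W1 x)) * ?W1 x"
      using conjunct2[OF S1] by blast
    show "ennreal (v x) = ennreal (v x / enn2real (?W2 x)) * ?W2 x"
      using conjunct2[OF S2] by blast
  qed
  then show ?thesis using conjunct1[OF S1] conjunct1[OF S2] by blast
qed


end
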